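(* Let $\mathcal Z=(Z_n)_{n\ge0}$ be an irreducible Markov chain on a finite state space $F$ with transition matrix $R$, and let $N\ge1$. There is a constant $\rho_N$, depending only on $R$ and $N$, such that the following holds for every initial distribution of $\mathcal Z$, all integers $0=k_1<k_2<\dots<k_N<\infty$ (with $k_{N+1}=\infty$), and every measurable $\Lambda:F^{\mathbb N_0}\to[0,\infty)$: if $(Z^i_n)_{k_i\le n\le k_{i+1}}$, $i=1,\dots,N$, are $N$ independent stationary Markov chains with transition matrix $R$, and $\tilde{\mathcal Z}=(\tilde Z_n)_{n\ge0}$ is defined by $\tilde Z_n=Z^i_n$ for $k_i\le n<k_{i+1}$, then $$\mathbb E(\Lambda(\mathcal Z))\le\rho_N\,\mathbb E(\Lambda(\tilde{\mathcal Z})).$$ *)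

theory Defs
  imports "HOL-Probability.Probability"
begin

definition path_space :: "(nat \<Rightarrow> 'a) measure" where
  "path_space = PiM UNIV (\<lambda>_. count_space UNIV)"

definition stochastic :: "('a::finite \<Rightarrow> 'a \<Rightarrow> real) \<Rightarrow> bool" where
  "stochastic R \<longleftrightarrow> (\<forall>x y. 0 \<le> R x y) \<and> (\<forall>x. (\<Sum>y\<in>UNIV. R x y) = 1)"

fun mpow :: "('a::finite \<Rightarrow> 'a \<Rightarrow> real) \<Rightarrow> nat \<Rightarrow> 'a \<Rightarrow> 'a \<Rightarrow> real" where
  "mpow R 0 x y = (if x = y then 1 else 0)"
| "mpow R (Suc n) x y = (\<Sum>z\<in>UNIV. mpow R n x z * R z y)"

definition irreducible_mc :: "('a::finite \<Rightarrow> 'a \<Rightarrow> real) \<Rightarrow> bool" where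
  "irreducible_mc R \<longleftrightarrow> (\<forall>x y. \<exists>n. mpow R n x y > 0)"

definition prob_dist :: "('a::finite \<Rightarrow> real) \<Rightarrow> bool" where
  "prob_dist \<mu> \<longleftrightarrow> (\<forall>x. 0 \<le> \<mu> x) \<and> (\<Sum>x\<in>UNIV. \<mu> x) = 1"

definition stationary_dist :: "('a::finite \<Rightarrow> 'a \<Rightarrow> real) \<Rightarrow> ('a \<Rightarrow> real) \<Rightarrow> bool" where
  "stationary_dist R \<pi> \<longleftrightarrow> prob_dist \<pi> \<and> (\<forall>y. (\<Sum>x\<in>UNIV. \<pi> x * R x y) = \<pi> y)"

definition markov_law :: "('a::finite \<Rightarrow> 'a \<Rightarrow> real) \<Rightarrow> ('a \<Rightarrow> real) \<Rightarrow> (nat \<Rightarrow> 'a) measure \<Rightarrow> bool" where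
  "markov_law R \<mu> P \<longleftrightarrow> prob_space P \<and> sets P = sets path_space \<and>
     (\<forall>n xs. length xs = Suc n \<longrightarrow>
        measure P {\<omega>. \<forall>i\<le>n. \<omega> i = xs ! i} = \<mu> (xs ! 0) * (\<Prod>i<n. R (xs ! i) (xs ! Suc i)))"

text \<open>Block index of time n for block start times k 0 < ... < k (N-1): the (0-based)
  index i < N with k i \<le> n < k (i+1) (with k N = infinity).\<close>
definition blk :: "(nat \<Rightarrow> nat) \<Rightarrow> nat \<Rightarrow> nat \<Rightarrow> nat" where
  "blk k N n = Max {i. i < N \<and> k i \<le> n}"

text \<open>Law of the glued process: N independent copies of a chain with law W (the i-th copy
  started at time k i, i.e. Z^i_n = W^i_{n - k i}), and tilde Z_n = Z^i_n on block i.\<close>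
definition glued_law :: "nat \<Rightarrow> (nat \<Rightarrow> nat) \<Rightarrow> (nat \<Rightarrow> 'a) measure \<Rightarrow> (nat \<Rightarrow> 'a) measure" where
  "glued_law N k W = distr (PiM {..<N} (\<lambda>_. W)) path_space
     (\<lambda>\<omega> n. \<omega> (blk k N n) (n - k (blk k N n)))"

end

theory Submission
  imports Defs
begin

lemma mpow_nonneg:
  assumes "stochastic R" shows "0 \<le> mpow R n x y"
  using assms by (induction n arbitrary: y) (auto simp: stochastic_def intro!: sum_nonneg)

lemma stat_mpow:
  assumes "stationary_dist R \<pi>" shows "(\<Sum>x\<in>UNIV. \<pi> x * mpow R n x y) = \<pi> y"
proof (induction n arbitrary: y)
  case 0
  have "(\<Sum>x\<in>UNIV. \<pi> x * mpow R 0 x y) = (\<Sum>x\<in>UNIV. if x = y then \<pi> x else 0)"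
    by (intro sum.cong) auto
  then show ?case by simp
next
  case (Suc n)
  have "(\<Sum>x\<in>UNIV. \<pi> x * mpow R (Suc n) x y) = (\<Sum>x\<in>UNIV. \<Sum>z\<in>UNIV. \<pi> x * mpow R n x z * R z y)"
    by (simp add: sum_distrib_left mult.assoc)
  also have "\<dots> = (\<Sum>z\<in>UNIV. (\<Sum>x\<in>UNIV. \<pi> x * mpow R n x z) * R z y)"
    by (subst sum.swap) (simp add: sum_distrib_right)
  also have "\<dots> = (\<Sum>z\<in>UNIV. \<pi> z * R z y)" using Suc by simp
  also have "\<dots> = \<pi> y" using assms by (simp add: stationary_dist_def)
  finally show ?case .
qed

lemma pi_lower:
  fixes R :: "'a::finite \<Rightarrow> 'a \<Rightarrow> real"
  assumes "stochastic R" "irreducible_mc R"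
  shows "\<exists>c>0. \<forall>\<pi>. stationary_dist R \<pi> \<longrightarrow> (\<forall>y. c \<le> \<pi> y)"
proof -
  define n where "n x y = (SOME n. mpow R n x y > 0)" for x y
  have npos: "mpow R (n x y) x y > 0" for x y
    unfolding n_def using assms(2) by (metis irreducible_mc_def someI_ex)
  define c where "c = Min ((\<lambda>(x,y). mpow R (n x y) x y) ` UNIV) / real CARD('a)"
  have "Min ((\<lambda>(x,y). mpow R (n x y) x y) ` UNIV) > 0"
    by (subst Min_gr_iff) (auto simp: npos)
  then have cpos: "c > 0" unfolding c_def by simp
  moreover have "c \<le> \<pi> y" if st: "stationary_dist R \<pi>" for \<pi> y
  proof -
    have pd: "prob_dist \<pi>" using st by (simp add: stationary_dist_def)
    obtain x where x: "\<pi> x \<ge> 1 / real CARD('a)"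
    proof (rule ccontr)
      assume "\<not> thesis"
      then have "\<forall>x. \<pi> x < 1 / real CARD('a)" using that by (meson not_le)
      then have "(\<Sum>x\<in>UNIV. \<pi> x) < (\<Sum>x\<in>(UNIV::'a set). 1 / real CARD('a))"
        by (intro sum_strict_mono) auto
      then show False using pd by (simp add: prob_dist_def)
    qed
    have "\<pi> y = (\<Sum>x'\<in>UNIV. \<pi> x' * mpow R (n x y) x' y)" using stat_mpow[OF st] by simp
    also have "\<dots> \<ge> \<pi> x * mpow R (n x y) x y"
      by (rule member_le_sum[where f="\<lambda>x'. \<pi> x' * mpow R (n x y) x' y"])
         (use pd mpow_nonneg[OF assms(1)] in \<open>auto simp: prob_dist_def\<close>)
    finally have 1: "\<pi> x * mpow R (n x y) x y \<le> \<pi> y" .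
    have 2: "Min ((\<lambda>(x,y). mpow R (n x y) x y) ` UNIV) \<le> mpow R (n x y) x y"
      by (rule Min_le) auto
    have "c \<le> (1 / real CARD('a)) * mpow R (n x y) x y"
      unfolding c_def using 2 by (simp add: divide_right_mono)
    also have "\<dots> \<le> \<pi> x * mpow R (n x y) x y"
      by (rule mult_right_mono[OF x]) (simp add: mpow_nonneg[OF assms(1)])
    finally show ?thesis using 1 by simp
  qed
  ultimately show ?thesis by blast
qed

locale blocks =
  fixes N :: nat and k :: "nat \<Rightarrow> nat"
  assumes N1: "N \<ge> 1" and k0: "k 0 = 0" and smono: "strict_mono_on {..<N} k"
begin

lemma k_less: "i < j \<Longrightarrow> j < N \<Longrightarrow> k i < k j"
  using smono by (auto simp: strict_mono_on_def)

lemma k_le: "i \<le> j \<Longrightarrow> j < N \<Longrightarrow> k i \<le> k j"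
  using k_less by (cases "i = j") (auto simp: order_le_less)

lemma k_inj: "inj_on k {..<N}"
proof (rule inj_onI)
  fix x y assume "x \<in> {..<N}" "y \<in> {..<N}" "k x = k y"
  then show "x = y" using k_less[of x y] k_less[of y x] by (cases x y rule: linorder_cases) auto
qed

definition "S t = {i. i < N \<and> k i \<le> t}"

lemma S_fin: "finite (S t)" and S_ne: "S t \<noteq> {}"
  using N1 k0 by (auto simp: S_def intro!: exI[of _ 0])

lemma blk_S: "blk k N t = Max (S t)" by (simp add: blk_def S_def)

lemma blk_lt: "blk k N t < N" and blk_le: "k (blk k N t) \<le> t"
  using Max_in[OF S_fin S_ne, of t] by (auto simp: blk_S S_def)

lemma blk_next: "Suc (blk k N t) < N \<Longrightarrow> t < k (Suc (blk k N t))"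
proof (rule ccontr)
  assume a: "Suc (blk k N t) < N" "\<not> t < k (Suc (blk k N t))"
  then have "Suc (blk k N t) \<in> S t" by (auto simp: S_def)
  then have "Suc (blk k N t) \<le> blk k N t" unfolding blk_S by (rule Max_ge[OF S_fin])
  then show False by simp
qed

lemma blk_eqI:
  assumes "j < N" "k j \<le> t" "Suc j < N \<longrightarrow> t < k (Suc j)"
  shows "blk k N t = j"
  unfolding blk_S
proof (rule Max_eqI[OF S_fin])
  show "j \<in> S t" using assms by (auto simp: S_def)
  fix i assume "i \<in> S t"
  then have i: "i < N" "k i \<le> t" by (auto simp: S_def)
  show "i \<le> j"
  proof (rule ccontr)
    assume "\<not> i \<le> j"
    then have "Suc j \<le> i" by simp
    then have "k (Suc j) \<le> k i" using k_le i by blast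
    moreover have "Suc j < N" using \<open>Suc j \<le> i\<close> i by simp
    ultimately show False using assms i by auto
  qed
qed

lemma blk_iff:
  assumes "j < N"
  shows "blk k N t = j \<longleftrightarrow> k j \<le> t \<and> (Suc j < N \<longrightarrow> t < k (Suc j))"
  using blk_eqI[OF assms] blk_le blk_next by blast

definition "bnd n j = (if Suc j < N then k (Suc j) - 1 else n)"

context
  fixes n assumes kN: "k (N - 1) \<le> n"
begin

lemma k_le_n: "j < N \<Longrightarrow> k j \<le> n"
proof -
  assume "j < N"
  moreover have "N - 1 < N" using N1 by simp
  ultimately have "k j \<le> k (N - 1)" using k_le[of j "N - 1"] by simp
  then show "k j \<le> n" using kN by simp
qed

lemma k_le_bnd: "j < N \<Longrightarrow> k j \<le> bnd n j"
  using k_less[of j "Suc j"] k_le_n by (auto simp: bnd_def)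

lemma bnd_le: "j < N \<Longrightarrow> bnd n j \<le> n"
  using k_le_n[of "Suc j"] by (auto simp: bnd_def)

lemma blockset: "j < N \<Longrightarrow> (t \<le> n \<and> blk k N t = j) \<longleftrightarrow> (k j \<le> t \<and> t \<le> bnd n j)"
  using k_le_n[of "Suc j"] k_less[of j "Suc j"] by (auto simp: blk_iff bnd_def)

lemma part: "{t. t < n \<and> Suc t \<notin> k ` {..<N}} = (\<Union>j<N. {k j..<bnd n j})"
proof safe
  fix t assume t: "t < n" "Suc t \<notin> k ` {..<N}"
  define j where "j = blk k N t"
  have j: "j < N" "k j \<le> t" using blk_lt blk_le by (auto simp: j_def)
  have "t < bnd n j"
  proof (cases "Suc j < N")
    case True
    then have "t < k (Suc j)" using blk_next by (simp add: j_def)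
    moreover have "Suc t \<noteq> k (Suc j)" using t True by blast
    ultimately show ?thesis using True by (simp add: bnd_def)
  next
    case False then show ?thesis using t by (simp add: bnd_def)
  qed
  then show "t \<in> (\<Union>j<N. {k j..<bnd n j})" using j by auto
next
  fix t j assume a: "j < N" "t \<in> {k j..<bnd n j}"
  then show "t < n" using bnd_le[of j] by simp
  fix i assume i: "i < N" "Suc t = k i"
  show False
  proof (cases "i \<le> j")
    case True then show False using k_le[of i j] a i by simp
  next
    case False
    then have "Suc j \<le> i" by simp
    then have "k (Suc j) \<le> k i" "Suc j < N" using k_le i by auto
    then show False using a i by (auto simp: bnd_def)
  qed
qed

lemma part_disj: "disjoint_family_on (\<lambda>j. {k j..<bnd n j}) {..<N}"
proof -
  have "{k i..<bnd n i} \<inter> {k j..<bnd n j} = {}" if "i < j" "j < N" for i j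
  proof -
    have "bnd n i < k (Suc i)" using that k_less[of i "Suc i"] by (auto simp: bnd_def)
    moreover have "k (Suc i) \<le> k j" using that k_le by auto
    ultimately show ?thesis by auto
  qed
  then show ?thesis unfolding disjoint_family_on_def
    by (metis Int_commute lessThan_iff linorder_neqE_nat)
qed

lemma T_sub: "{t. Suc t \<in> k ` {..<N}} \<subseteq> {..<n}"
  using k_le_n by force

end

end

lemma space_path: "space path_space = UNIV"
  by (simp add: path_space_def space_PiM)

lemma coord_meas: "(\<lambda>\<omega>. \<omega> i) \<in> measurable path_space (count_space UNIV)"
  unfolding path_space_def by measurable

lemma cyl_sets: "{\<omega>. \<forall>i\<le>n. \<omega> i = x i} \<in> sets path_space"
proof -
  have "{\<omega>. \<forall>i\<le>n. \<omega> i = x i} = (\<Inter>i\<in>{..n}. (\<lambda>\<omega>. \<omega> i) -` {x i} \<inter> space path_space)"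
    by (auto simp: space_path)
  also have "\<dots> \<in> sets path_space"
    by (intro sets.finite_INT measurable_sets[OF coord_meas]) auto
  finally show ?thesis .
qed

lemma markov_cyl:
  assumes "markov_law R \<mu> P"
  shows "emeasure P {\<omega>. \<forall>i\<le>n. \<omega> i = x i} = ennreal (\<mu> (x 0) * (\<Prod>i<n. R (x i) (x (Suc i))))"
proof -
  interpret prob_space P using assms by (simp add: markov_law_def)
  define xs where "xs = map x [0..<Suc n]"
  have len: "length xs = Suc n" by (simp add: xs_def)
  have nth: "i \<le> n \<Longrightarrow> xs ! i = x i" for i by (simp add: xs_def nth_map less_Suc_eq_le del: upt_Suc)
  have "{\<omega>. \<forall>i\<le>n. \<omega> i = x i} = {\<omega>. \<forall>i\<le>n. \<omega> i = xs ! i}" using nth by auto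
  moreover have "(\<Prod>i<n. R (x i) (x (Suc i))) = (\<Prod>i<n. R (xs ! i) (xs ! Suc i))"
    by (intro prod.cong) (auto simp: nth)
  moreover have "x 0 = xs ! 0" using nth by simp
  moreover have "measure P {\<omega>. \<forall>i\<le>n. \<omega> i = xs ! i} = \<mu> (xs!0) * (\<Prod>i<n. R (xs ! i) (xs ! Suc i))"
    using assms len unfolding markov_law_def by blast
  ultimately have "measure P {\<omega>. \<forall>i\<le>n. \<omega> i = x i} = \<mu> (x 0) * (\<Prod>i<n. R (x i) (x (Suc i)))"
    by simp
  then show ?thesis by (simp add: emeasure_eq_measure)
qed

context blocks begin

definition "glue \<omega> = (\<lambda>t. \<omega> (blk k N t) (t - k (blk k N t)))"

lemma glue_meas:
  assumes W: "sets W = sets path_space"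
  shows "glue \<in> measurable (PiM {..<N} (\<lambda>_. W)) path_space"
  unfolding path_space_def glue_def
proof (rule measurable_PiM_single')
  fix t :: nat
  have cm: "(\<lambda>w. w (t - k (blk k N t))) \<in> measurable W (count_space UNIV)"
    using coord_meas measurable_cong_sets[OF W refl] by blast
  show "(\<lambda>\<omega>. \<omega> (blk k N t) (t - k (blk k N t))) \<in> measurable (PiM {..<N} (\<lambda>_. W)) (count_space UNIV)"
  proof -
    have b: "blk k N t \<in> {..<N}" using blk_lt by simp
    show ?thesis using measurable_compose[OF measurable_component_singleton[OF b, of "\<lambda>_. W"] cm] by simp
  qed
qed simp

lemma Q_cyl:
  assumes W: "markov_law R \<pi> W" and kN: "k (N - 1) \<le> n"
    and Rnn: "\<And>x y. 0 \<le> R x y" and pnn: "\<And>x. 0 \<le> \<pi> x"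
  shows "emeasure (glued_law N k W) {\<omega>. \<forall>i\<le>n. \<omega> i = x i} =
    ennreal ((\<Prod>j<N. \<pi> (x (k j))) * (\<Prod>t\<in>{t. t < n \<and> Suc t \<notin> k ` {..<N}}. R (x t) (x (Suc t))))"
proof -
  have Wp: "prob_space W" and Ws: "sets W = sets path_space" using W by (auto simp: markov_law_def)
  have spW: "space W = UNIV" using sets_eq_imp_space_eq[OF Ws] by (simp add: space_path)
  interpret product_prob_space "\<lambda>_::nat. W" by (rule product_prob_spaceI) (rule Wp)
  define E where "E j = {w. \<forall>s\<le>bnd n j - k j. w s = x (k j + s)}" for j
  have gl: "glued_law N k W = distr (PiM {..<N} (\<lambda>_. W)) path_space glue"
    by (simp add: glued_law_def glue_def[abs_def])
  have "emeasure (glued_law N k W) {\<omega>. \<forall>i\<le>n. \<omega> i = x i} =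
     emeasure (PiM {..<N} (\<lambda>_. W)) (glue -` {\<omega>. \<forall>i\<le>n. \<omega> i = x i} \<inter> space (PiM {..<N} (\<lambda>_. W)))"
    unfolding gl by (rule emeasure_distr[OF glue_meas[OF Ws] cyl_sets])
  also have "glue -` {\<omega>. \<forall>i\<le>n. \<omega> i = x i} \<inter> space (PiM {..<N} (\<lambda>_. W)) = PiE {..<N} E"
  proof (intro equalityI subsetI)
    fix \<omega> assume a: "\<omega> \<in> glue -` {\<omega>. \<forall>i\<le>n. \<omega> i = x i} \<inter> space (PiM {..<N} (\<lambda>_. W))"
    then have ext: "\<omega> \<in> extensional {..<N}" by (auto simp: space_PiM PiE_def)
    have "\<omega> j \<in> E j" if j: "j < N" for j
      unfolding E_def
    proof safe
      fix s assume s: "s \<le> bnd n j - k j"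
      define t where "t = k j + s"
      have "t \<le> n \<and> blk k N t = j" using blockset[OF kN j] k_le_bnd[OF kN j] s by (simp add: t_def)
      then show "\<omega> j s = x (k j + s)" using a by (auto simp: glue_def t_def)
    qed
    then show "\<omega> \<in> PiE {..<N} E" using ext by (auto simp: PiE_def)
  next
    fix \<omega> assume a: "\<omega> \<in> PiE {..<N} E"
    have "\<omega> (blk k N t) (t - k (blk k N t)) = x t" if t: "t \<le> n" for t
    proof -
      define j where "j = blk k N t"
      have j: "j < N" using blk_lt by (simp add: j_def)
      have "k j \<le> t \<and> t \<le> bnd n j" using blockset[OF kN j, of t] t by (simp add: j_def)
      moreover have "\<omega> j \<in> E j" using a j by auto
      ultimately show ?thesis unfolding E_def j_def[symmetric] by auto
    qed
    then show "\<omega> \<in> glue -` {\<omega>. \<forall>i\<le>n. \<omega> i = x i} \<inter> space (PiM {..<N} (\<lambda>_. W))"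
      using a by (auto simp: glue_def space_PiM spW PiE_def)
  qed
  also have "emeasure (PiM {..<N} (\<lambda>_. W)) (PiE {..<N} E) = (\<Prod>j<N. emeasure W (E j))"
    by (rule emeasure_PiM) (auto simp: E_def Ws cyl_sets)
  also have "\<dots> = (\<Prod>j<N. ennreal (\<pi> (x (k j)) * (\<Prod>t\<in>{k j..<bnd n j}. R (x t) (x (Suc t)))))"
  proof (intro prod.cong refl)
    fix j assume j: "j \<in> {..<N}"
    have "emeasure W (E j) = ennreal (\<pi> (x (k j + 0)) * (\<Prod>s<bnd n j - k j. R (x (k j + s)) (x (k j + Suc s))))"
      unfolding E_def by (rule markov_cyl[OF W])
    also have "(\<Prod>s<bnd n j - k j. R (x (k j + s)) (x (k j + Suc s))) = (\<Prod>t\<in>{k j..<bnd n j}. R (x t) (x (Suc t)))"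
    proof -
      have "{k j..<bnd n j} = (\<lambda>s. k j + s) ` {..<bnd n j - k j}"
        using k_le_bnd[OF kN, of j] j apply (auto simp: image_iff)
        subgoal for t by (rule bexI[of _ "t - k j"]) auto
        done
      then show ?thesis by (simp add: prod.reindex)
    qed
    finally show "emeasure W (E j) = ennreal (\<pi> (x (k j)) * (\<Prod>t\<in>{k j..<bnd n j}. R (x t) (x (Suc t))))" by simp
  qed
  also have "\<dots> = ennreal (\<Prod>j<N. \<pi> (x (k j)) * (\<Prod>t\<in>{k j..<bnd n j}. R (x t) (x (Suc t))))"
    by (rule prod_ennreal) (auto intro!: mult_nonneg_nonneg prod_nonneg Rnn pnn)
  also have "(\<Prod>j<N. \<pi> (x (k j)) * (\<Prod>t\<in>{k j..<bnd n j}. R (x t) (x (Suc t)))) =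
     (\<Prod>j<N. \<pi> (x (k j))) * (\<Prod>j<N. \<Prod>t\<in>{k j..<bnd n j}. R (x t) (x (Suc t)))"
    by (rule prod.distrib)
  also have "(\<Prod>j<N. \<Prod>t\<in>{k j..<bnd n j}. R (x t) (x (Suc t))) =
      (\<Prod>t\<in>(\<Union>j<N. {k j..<bnd n j}). R (x t) (x (Suc t)))"
    using part_disj[OF kN] by (subst prod.UNION_disjoint) (auto simp: disjoint_family_on_def)
  also have "(\<Union>j<N. {k j..<bnd n j}) = {t. t < n \<and> Suc t \<notin> k ` {..<N}}"
    using part[OF kN] by simp
  finally show ?thesis .
qed

end

context blocks begin

definition gfun :: "('a::finite \<Rightarrow> 'a \<Rightarrow> real) \<Rightarrow> ('a \<Rightarrow> real) \<Rightarrow> ('a \<Rightarrow> real) \<Rightarrow> (nat \<Rightarrow> 'a) \<Rightarrow> real"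
  where "gfun R \<mu> \<pi> x = \<mu> (x 0) * (\<Prod>t\<in>{t. Suc t \<in> k ` {..<N}}. R (x t) (x (Suc t))) / (\<Prod>j<N. \<pi> (x (k j)))"

lemma gfun_meas: "(\<lambda>\<omega>. ennreal (gfun R \<mu> \<pi> \<omega>)) \<in> borel_measurable path_space"
  unfolding path_space_def gfun_def by measurable

lemma gfun_local:
  assumes "k (N - 1) \<le> n" "\<forall>i\<le>n. \<omega> i = x i"
  shows "gfun R \<mu> \<pi> \<omega> = gfun R \<mu> \<pi> x"
proof -
  have a: "(\<Prod>t\<in>{t. Suc t \<in> k ` {..<N}}. R (\<omega> t) (\<omega> (Suc t))) = (\<Prod>t\<in>{t. Suc t \<in> k ` {..<N}}. R (x t) (x (Suc t)))"
  proof (intro prod.cong refl)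
    fix t assume "t \<in> {t. Suc t \<in> k ` {..<N}}"
    then have "Suc t \<le> n" using k_le_n[OF assms(1)] by auto
    then show "R (\<omega> t) (\<omega> (Suc t)) = R (x t) (x (Suc t))" using assms(2) by simp
  qed
  have b: "(\<Prod>j<N. \<pi> (\<omega> (k j))) = (\<Prod>j<N. \<pi> (x (k j)))"
    using k_le_n[OF assms(1)] assms(2) by (intro prod.cong refl) auto
  show ?thesis unfolding gfun_def a b using assms(2) by simp
qed

lemma P_cyl_eq:
  assumes P: "markov_law R \<mu> P" and W: "markov_law R \<pi> W" and kN: "k (N - 1) \<le> n"
    and Rnn: "\<And>x y. 0 \<le> R x y" and ppos: "\<And>x. 0 < \<pi> x" and mnn: "\<And>x. 0 \<le> \<mu> x"
  shows "emeasure P {\<omega>. \<forall>i\<le>n. \<omega> i = x i} = ennreal (gfun R \<mu> \<pi> x) * emeasure (glued_law N k W) {\<omega>. \<forall>i\<le>n. \<omega> i = x i}"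
proof -
  have pnn: "\<And>x. 0 \<le> \<pi> x" using ppos less_imp_le by blast
  define T where "T = {t. Suc t \<in> k ` {..<N}}"
  define U where "U = {t. t < n \<and> Suc t \<notin> k ` {..<N}}"
  have TU: "{..<n} = T \<union> U" "T \<inter> U = {}" "finite T" "finite U"
    using T_sub[OF kN] by (auto simp: T_def U_def intro: finite_subset)
  have "(\<Prod>i<n. R (x i) (x (Suc i))) = (\<Prod>i\<in>T. R (x i) (x (Suc i))) * (\<Prod>i\<in>U. R (x i) (x (Suc i)))"
    unfolding TU(1) by (rule prod.union_disjoint[OF TU(3,4,2)])
  moreover define Pp where "Pp = (\<Prod>j<N. \<pi> (x (k j)))"
  moreover have "Pp > 0" unfolding Pp_def by (intro prod_pos) (simp add: ppos)
  moreover define PT where "PT = (\<Prod>i\<in>T. R (x i) (x (Suc i)))"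
  moreover define PU where "PU = (\<Prod>i\<in>U. R (x i) (x (Suc i)))"
  ultimately have eq: "\<mu> (x 0) * (\<Prod>i<n. R (x i) (x (Suc i))) = gfun R \<mu> \<pi> x * ((\<Prod>j<N. \<pi> (x (k j))) * (\<Prod>i\<in>U. R (x i) (x (Suc i))))"
    unfolding gfun_def T_def[symmetric] Pp_def[symmetric] PT_def[symmetric] PU_def[symmetric] by simp
  have gnn: "0 \<le> gfun R \<mu> \<pi> x" unfolding gfun_def
    by (intro divide_nonneg_nonneg mult_nonneg_nonneg prod_nonneg) (auto simp: Rnn pnn mnn)
  show ?thesis
    unfolding markov_cyl[OF P] Q_cyl[OF W kN Rnn pnn] eq U_def[symmetric]
    using gnn by (simp add: ennreal_mult prod_nonneg Rnn pnn)
qed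

lemma P_density:
  assumes P: "markov_law R \<mu> P" and W: "markov_law R \<pi> W"
    and Rnn: "\<And>x y. 0 \<le> R x y" and ppos: "\<And>x. 0 < \<pi> x" and mnn: "\<And>x. 0 \<le> \<mu> x"
  shows "P = density (glued_law N k W) (\<lambda>\<omega>. ennreal (gfun R \<mu> \<pi> \<omega>))"
proof -
  define Q where "Q = glued_law N k W"
  define G where "G = (\<lambda>\<omega>. ennreal (gfun R \<mu> \<pi> \<omega>))"
  have sQ: "sets Q = sets path_space" by (simp add: Q_def glued_law_def)
  have sP: "sets P = sets path_space" and pP: "prob_space P" using P by (auto simp: markov_law_def)
  have Gm: "G \<in> borel_measurable Q"
    using gfun_meas measurable_cong_sets[OF sQ refl] unfolding G_def by blast
  show ?thesis unfolding Q_def[symmetric] G_def[symmetric]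
  proof (rule measure_eqI_PiM_infinite[where I=UNIV and M="\<lambda>_. count_space UNIV"])
    show "sets P = sets (PiM UNIV (\<lambda>_. count_space UNIV))" using sP by (simp add: path_space_def)
    show "sets (density Q G) = sets (PiM UNIV (\<lambda>_. count_space UNIV))" using sQ by (simp add: path_space_def)
    show "finite_measure P" using pP by (simp add: prob_space_def)
  next
    fix A J assume J: "finite (J::nat set)" "J \<subseteq> UNIV" and "\<And>i. i \<in> J \<Longrightarrow> A i \<in> sets (count_space (UNIV::'a set))"
    define n where "n = k (N - 1) + Max (insert 0 J)"
    have kN: "k (N - 1) \<le> n" by (simp add: n_def)
    have Jn: "i \<le> n" if "i \<in> J" for i
    proof -
      have "i \<le> Max (insert 0 J)" by (rule Max_ge) (use J that in auto)
      then show ?thesis unfolding n_def by linarith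
    qed
    define X where "X = {x \<in> PiE {..n} (\<lambda>_. UNIV). \<forall>i\<in>J. x i \<in> A i}"
    define C where "C x = {\<omega>::nat\<Rightarrow>'a. \<forall>i\<le>n. \<omega> i = x i}" for x
    have fPi: "finite (PiE {..n} (\<lambda>_. UNIV::'a set))" by (rule finite_PiE) auto
    have finX: "finite X" by (rule finite_subset[OF _ fPi]) (auto simp: X_def)
    have emb: "prod_emb UNIV (\<lambda>_. count_space UNIV) J (PiE J A) = (\<Union>x\<in>X. C x)"
    proof (intro equalityI subsetI)
      fix \<omega> assume "\<omega> \<in> prod_emb UNIV (\<lambda>_. count_space UNIV) J (PiE J A)"
      then have a: "\<forall>i\<in>J. \<omega> i \<in> A i" by (auto simp: prod_emb_iff PiE_iff)
      have "restrict \<omega> {..n} \<in> X" using a Jn by (auto simp: X_def)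
      moreover have "\<omega> \<in> C (restrict \<omega> {..n})" by (simp add: C_def)
      ultimately show "\<omega> \<in> (\<Union>x\<in>X. C x)" by blast
    next
      fix \<omega> assume "\<omega> \<in> (\<Union>x\<in>X. C x)"
      then obtain x where "x \<in> X" "\<omega> \<in> C x" by blast
      then have "\<forall>i\<in>J. \<omega> i \<in> A i" using Jn by (auto simp: X_def C_def)
      then show "\<omega> \<in> prod_emb UNIV (\<lambda>_. count_space UNIV) J (PiE J A)"
        by (auto simp: prod_emb_iff PiE_iff)
    qed
    have disj: "disjoint_family_on C X"
    unfolding disjoint_family_on_def
    proof (intro ballI impI)
      fix x y assume xy: "x \<in> X" "y \<in> X" "x \<noteq> y"
      then obtain i where i: "x i \<noteq> y i" by blast
      have "i \<le> n"
      proof (rule ccontr)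
        assume "\<not> i \<le> n"
        then have "x i = undefined" "y i = undefined" using xy by (auto simp: X_def PiE_def extensional_def)
        then show False using i by simp
      qed
      then show "C x \<inter> C y = {}" using i by (auto simp: C_def)
    qed
    have Cs: "C x \<in> sets path_space" for x unfolding C_def by (rule cyl_sets)
    have "emeasure P (\<Union>x\<in>X. C x) = (\<Sum>x\<in>X. emeasure P (C x))"
      by (rule sum_emeasure[symmetric]) (use Cs sP disj finX in auto)
    also have "\<dots> = (\<Sum>x\<in>X. emeasure (density Q G) (C x))"
    proof (intro sum.cong refl)
      fix x
      have "emeasure (density Q G) (C x) = (\<integral>\<^sup>+\<omega>. G \<omega> * indicator (C x) \<omega> \<partial>Q)"
        by (rule emeasure_density[OF Gm]) (simp add: sQ Cs)
      also have "\<dots> = (\<integral>\<^sup>+\<omega>. ennreal (gfun R \<mu> \<pi> x) * indicator (C x) \<omega> \<partial>Q)"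
      proof (intro nn_integral_cong)
        fix \<omega>
        show "G \<omega> * indicator (C x) \<omega> = ennreal (gfun R \<mu> \<pi> x) * indicator (C x) \<omega>"
        proof (cases "\<omega> \<in> C x")
          case True
          then have "gfun R \<mu> \<pi> \<omega> = gfun R \<mu> \<pi> x" unfolding C_def by (intro gfun_local[OF kN]) simp
          then show ?thesis by (simp add: G_def)
        qed simp
      qed
      also have "\<dots> = ennreal (gfun R \<mu> \<pi> x) * emeasure Q (C x)"
        by (rule nn_integral_cmult_indicator) (simp add: sQ Cs)
      also have "\<dots> = emeasure P (C x)"
        unfolding C_def Q_def by (rule P_cyl_eq[OF P W kN Rnn ppos mnn, symmetric])
      finally show "emeasure P (C x) = emeasure (density Q G) (C x)" ..
    qed
    also have "\<dots> = emeasure (density Q G) (\<Union>x\<in>X. C x)"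
      by (rule sum_emeasure) (use Cs sQ disj finX in auto)
    finally show "emeasure P (prod_emb UNIV (\<lambda>_. count_space UNIV) J (PiE J A)) =
        emeasure (density Q G) (prod_emb UNIV (\<lambda>_. count_space UNIV) J (PiE J A))"
      unfolding emb .
  qed
qed

end

theorem lemma5p1:
  fixes R :: "'a::finite \<Rightarrow> 'a \<Rightarrow> real" and N :: nat
  assumes "stochastic R" and "irreducible_mc R" and "N \<ge> 1"
  shows "\<exists>\<rho>::real. \<forall>\<mu> P \<pi> W (k::nat \<Rightarrow> nat) (\<Lambda>::(nat \<Rightarrow> 'a) \<Rightarrow> real).
     prob_dist \<mu> \<and> markov_law R \<mu> P \<and>
     stationary_dist R \<pi> \<and> markov_law R \<pi> W \<and>
     k 0 = 0 \<and> strict_mono_on {..<N} k \<and>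
     \<Lambda> \<in> borel_measurable path_space \<and> (\<forall>\<omega>. 0 \<le> \<Lambda> \<omega>)
     \<longrightarrow> (\<integral>\<^sup>+\<omega>. ennreal (\<Lambda> \<omega>) \<partial>P) \<le> ennreal \<rho> * (\<integral>\<^sup>+\<omega>. ennreal (\<Lambda> \<omega>) \<partial>glued_law N k W)"
proof -
  obtain c where c: "c > 0" "\<And>\<pi> y. stationary_dist R \<pi> \<Longrightarrow> c \<le> \<pi> y"
    using pi_lower[OF assms(1,2)] by blast
  have Rnn: "\<And>x y. 0 \<le> R x y" using assms(1) by (simp add: stochastic_def)
  have Rle: "R x y \<le> 1" for x y
  proof -
    have "R x y \<le> (\<Sum>y'\<in>UNIV. R x y')" by (rule member_le_sum) (auto simp: Rnn)
    then show ?thesis using assms(1) by (simp add: stochastic_def)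
  qed
  show ?thesis
  proof (intro exI allI impI, elim conjE)
    fix \<mu> P \<pi> W and k :: "nat \<Rightarrow> nat" and \<Lambda> :: "(nat \<Rightarrow> 'a) \<Rightarrow> real"
    assume mu: "prob_dist \<mu>" and P: "markov_law R \<mu> P" and st: "stationary_dist R \<pi>"
      and W: "markov_law R \<pi> W" and k0: "k 0 = 0" and sm: "strict_mono_on {..<N} k"
      and Lm: "\<Lambda> \<in> borel_measurable path_space" and Lnn: "\<forall>\<omega>. 0 \<le> \<Lambda> \<omega>"
    interpret blocks N k using assms(3) k0 sm by unfold_locales
    have ppos: "\<And>x. 0 < \<pi> x" using c st by (meson less_le_trans)
    have mnn: "\<And>x. 0 \<le> \<mu> x" using mu by (simp add: prob_dist_def)
    have mle: "\<mu> x \<le> 1" for x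
    proof -
      have "\<mu> x \<le> (\<Sum>y\<in>UNIV. \<mu> y)" by (rule member_le_sum) (auto simp: mnn)
      then show ?thesis using mu by (simp add: prob_dist_def)
    qed
    define Q where "Q = glued_law N k W"
    have sQ: "sets Q = sets path_space" by (simp add: Q_def glued_law_def)
    have Gm: "(\<lambda>\<omega>. ennreal (gfun R \<mu> \<pi> \<omega>)) \<in> borel_measurable Q"
      using gfun_meas measurable_cong_sets[OF sQ refl] by blast
    have Lm': "(\<lambda>\<omega>. ennreal (\<Lambda> \<omega>)) \<in> borel_measurable Q"
    proof -
      have "(\<lambda>\<omega>. ennreal (\<Lambda> \<omega>)) \<in> borel_measurable path_space" using Lm by measurable
      then show ?thesis using measurable_cong_sets[OF sQ refl] by blast
    qed
    have gle: "gfun R \<mu> \<pi> \<omega> \<le> 1 / c ^ N" for \<omega>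
    proof -
      define Pp where "Pp = (\<Prod>j<N. \<pi> (\<omega> (k j)))"
      define PT where "PT = (\<Prod>t\<in>{t. Suc t \<in> k ` {..<N}}. R (\<omega> t) (\<omega> (Suc t)))"
      have "c ^ N = (\<Prod>j<N. c)" by simp
      also have "\<dots> \<le> Pp" unfolding Pp_def
        by (rule prod_mono) (use c st in auto)
      finally have cP: "c ^ N \<le> Pp" .
      have PT1: "PT \<le> 1" "0 \<le> PT" unfolding PT_def
        by (auto intro!: prod_le_1 prod_nonneg simp: Rnn Rle)
      have "\<mu> (\<omega> 0) * PT \<le> 1" using mle[of "\<omega> 0"] PT1 mnn[of "\<omega> 0"]
        by (simp add: mult_le_one)
      moreover have "0 \<le> \<mu> (\<omega> 0) * PT" using PT1 mnn[of "\<omega> 0"] by simp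
      moreover have "0 < c ^ N" using c by simp
      ultimately have "\<mu> (\<omega> 0) * PT / Pp \<le> 1 / c ^ N"
      proof -
        assume a: "\<mu> (\<omega> 0) * PT \<le> 1" "0 \<le> \<mu> (\<omega> 0) * PT" "0 < c ^ N"
        have Pp0: "0 < Pp" using a(3) cP by linarith
        have "\<mu> (\<omega> 0) * PT / Pp \<le> 1 / Pp" using a(1) Pp0 by (simp add: divide_right_mono)
        also have "\<dots> \<le> 1 / c ^ N" using cP a(3) Pp0 by (intro divide_left_mono) auto
        finally show ?thesis .
      qed
      then show ?thesis unfolding gfun_def PT_def[symmetric] Pp_def[symmetric] .
    qed
    have "(\<integral>\<^sup>+\<omega>. ennreal (\<Lambda> \<omega>) \<partial>P) = (\<integral>\<^sup>+\<omega>. ennreal (\<Lambda> \<omega>) \<partial>density Q (\<lambda>\<omega>. ennreal (gfun R \<mu> \<pi> \<omega>)))"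
      using P_density[OF P W Rnn ppos mnn] by (simp add: Q_def)
    also have "\<dots> = (\<integral>\<^sup>+\<omega>. ennreal (gfun R \<mu> \<pi> \<omega>) * ennreal (\<Lambda> \<omega>) \<partial>Q)"
      by (rule nn_integral_density[OF Gm Lm'])
    also have "\<dots> \<le> (\<integral>\<^sup>+\<omega>. ennreal (1 / c ^ N) * ennreal (\<Lambda> \<omega>) \<partial>Q)"
      by (intro nn_integral_mono mult_right_mono ennreal_leI gle) simp
    also have "\<dots> = ennreal (1 / c ^ N) * (\<integral>\<^sup>+\<omega>. ennreal (\<Lambda> \<omega>) \<partial>Q)"
      by (rule nn_integral_cmult[OF Lm'])
    finally show "(\<integral>\<^sup>+\<omega>. ennreal (\<Lambda> \<omega>) \<partial>P) \<le> ennreal (1 / c ^ N) * (\<integral>\<^sup>+\<omega>. ennreal (\<Lambda> \<omega>) \<partial>glued_law N k W)"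
      by (simp add: Q_def)
  qed
qed

end
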